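(* Let $\mathcal{S}$ be a square-free staged tree containing a saturated subtree $\mathcal{T}$ rooted at a situation $s$, and let $\mathcal{S}'$ be the staged tree obtained by the resize operator that contracts $\mathcal{T}$ into a floret $\mathcal{F}$. Let $\alpha>0$, let $\mathcal{D}=(N_\lambda)_{\lambda\in\Lambda(\mathcal{S})}$ be a complete data sample on $\mathcal{S}$ and $\mathcal{D}'$ the sample on $\mathcal{S}'$ obtained by transferring each $N_\lambda$ to the corresponding root-to-leaf path of $\mathcal{S}'$. Then $\mathrm{BDepu}(\mathcal{S},\mathcal{D};\alpha)=\mathrm{BDepu}(\mathcal{S}',\mathcal{D}';\alpha)$.
   Context: An event tree is a finite directed rooted tree whose edges are directed away from the root; nodes with no outgoing edges are leaves, all other nodes are situations. A staged tree $\mathcal{S}$ is an event tree together with a partition of its situations into stages $u_1,\dots,u_J$ such that all situations in $u_j$ have the same number $r_j$ of outgoing edges, labelled $1,\dots,r_j$ at each situation of $u_j$; the $k$-th edge of every situation in $u_j$ carries the same conditional transition probability $\theta_{jk}$. A staged tree is square-free if no two situations on the same root-to-leaf path lie in the same stage. $\Lambda(\mathcal{S})$ is the set of root-to-leaf paths and, for an edge $e$, $\Lambda(e)$ is the set of root-to-leaf paths containing $e$. Resize: a subtree $\mathcal{T}$ rooted at a situation $s$ consists of $s$, some of its descendants and the edges between them, such that with every non-subleaf node it contains all of its outgoing edges; its subleaves are its nodes having no outgoing edges within $\mathcal{T}$. $\mathcal{T}$ is saturated if every situation of $\mathcal{T}$ that is not a subleaf forms a stage by itself (a singleton stage occurring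 nowhere else in $\mathcal{S}$). The resize operator contracts $\mathcal{T}$ into a floret $\mathcal{F}$: $s$ is given one outgoing edge for each root-to-subleaf path of $\mathcal{T}$, entering the corresponding subleaf (with everything below the subleaf unchanged), with transition probability equal to the product of the transition probabilities along that path; the root of $\mathcal{F}$ forms a singleton stage. This induces a bijection between the root-to-leaf paths of $\mathcal{S}$ and of the resulting staged tree $\mathcal{S}'$. A complete data sample $\mathcal{D}$ assigns to each root-to-leaf path $\lambda$ a number $N_\lambda\ge 0$ of units. For stage $u_j$, $n_{jk}$ is the number of units whose path passes through the $k$-th outgoing edge of some situation in $u_j$, $\overline{n}_j=\sum_k n_{jk}$. The BDepu score with imaginary sample size $\alpha>0$ is $$\mathrm{BDepu}(\mathcal{S},\mathcal{D};\alpha)=\prod_{j=1}^{J}\left[\frac{\Gamma(\overline{\alpha}_j)}{\Gamma(\overline{\alpha}_j+\overline{n}_j)}\prod_{k=1}^{r_j}\frac{\Gamma(\alpha_{jk}+n_{jk})}{\Gamma(\alpha_{jk})}\right],\quad \alpha_{jk}=\frac{\alpha}{|\Lambda(\mathcal{S})|}\sum_{m=1}^{h_j}|\Lambda(e^m_{jk})|,\quad \overline{\alpha}_j=\sum_{k=1}^{r_j}\alpha_{jk},$$ where $h_j$ is the number of situations in $u_j$ and $e^m_{jk}$ is the $k$-th outgoing edge of the $m$-th situation of $u_j$. *)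

theory Defs
  imports "HOL-Analysis.Analysis"
begin

definition children :: "('a \<times> 'a) set \<Rightarrow> 'a \<Rightarrow> 'a set" where
  "children E v = {w. (v, w) \<in> E}"

definition event_tree :: "'a set \<Rightarrow> ('a \<times> 'a) set \<Rightarrow> 'a \<Rightarrow> bool" where
  "event_tree V E r \<longleftrightarrow> finite V \<and> r \<in> V \<and> E \<subseteq> V \<times> V
     \<and> (\<forall>v. (v, r) \<notin> E)
     \<and> (\<forall>w\<in>V - {r}. \<exists>!v. (v, w) \<in> E)
     \<and> (\<forall>v\<in>V. (r, v) \<in> E\<^sup>*)"

definition situations :: "('a \<times> 'a) set \<Rightarrow> 'a set" where
  "situations E = {v. children E v \<noteq> {}}"

definition rl_paths :: "('a \<times> 'a) set \<Rightarrow> 'a \<Rightarrow> 'a list set" where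
  "rl_paths E r = {xs. xs \<noteq> [] \<and> hd xs = r
      \<and> (\<forall>i. Suc i < length xs \<longrightarrow> (xs ! i, xs ! Suc i) \<in> E)
      \<and> children E (last xs) = {}}"

definition path_edges :: "'a list \<Rightarrow> ('a \<times> 'a) set" where
  "path_edges xs = set (zip xs (tl xs))"

definition paths_through :: "('a \<times> 'a) set \<Rightarrow> 'a \<Rightarrow> 'a \<times> 'a \<Rightarrow> 'a list set" where
  "paths_through E r e = {xs \<in> rl_paths E r. e \<in> path_edges xs}"

text \<open>The stage partition is given by a function stg on situations (two situations are
  in the same stage iff they have the same stg value); lab labels the outgoing edges of
  every situation bijectively by 1..(number of outgoing edges).\<close>
definition staged_tree ::
  "'a set \<Rightarrow> ('a \<times> 'a) set \<Rightarrow> 'a \<Rightarrow> ('a \<Rightarrow> 'b) \<Rightarrow> ('a \<times> 'a \<Rightarrow> nat) \<Rightarrow> bool" where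
  "staged_tree V E r stg lab \<longleftrightarrow> event_tree V E r
     \<and> (\<forall>v\<in>situations E. \<forall>w\<in>situations E. stg v = stg w \<longrightarrow>
            card (children E v) = card (children E w))
     \<and> (\<forall>v\<in>situations E. bij_betw (\<lambda>w. lab (v, w)) (children E v) {1..card (children E v)})"

definition square_free :: "('a \<times> 'a) set \<Rightarrow> 'a \<Rightarrow> ('a \<Rightarrow> 'b) \<Rightarrow> bool" where
  "square_free E r stg \<longleftrightarrow> (\<forall>xs\<in>rl_paths E r. \<forall>i j. i < length xs \<and> j < length xs \<and> i \<noteq> j
       \<and> xs ! i \<in> situations E \<and> xs ! j \<in> situations E \<longrightarrow> stg (xs ! i) \<noteq> stg (xs ! j))"

definition stages :: "('a \<times> 'a) set \<Rightarrow> ('a \<Rightarrow> 'b) \<Rightarrow> 'b set" where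
  "stages E stg = stg ` situations E"

definition stage_members :: "('a \<times> 'a) set \<Rightarrow> ('a \<Rightarrow> 'b) \<Rightarrow> 'b \<Rightarrow> 'a set" where
  "stage_members E stg j = {v \<in> situations E. stg v = j}"

definition stage_deg :: "('a \<times> 'a) set \<Rightarrow> ('a \<Rightarrow> 'b) \<Rightarrow> 'b \<Rightarrow> nat" where
  "stage_deg E stg j = card (children E (SOME v. v \<in> stage_members E stg j))"

definition stage_edges ::
  "('a \<times> 'a) set \<Rightarrow> ('a \<Rightarrow> 'b) \<Rightarrow> ('a \<times> 'a \<Rightarrow> nat) \<Rightarrow> 'b \<Rightarrow> nat \<Rightarrow> ('a \<times> 'a) set" where
  "stage_edges E stg lab j k = {e \<in> E. fst e \<in> stage_members E stg j \<and> lab e = k}"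

definition count_n ::
  "('a \<times> 'a) set \<Rightarrow> 'a \<Rightarrow> ('a \<Rightarrow> 'b) \<Rightarrow> ('a \<times> 'a \<Rightarrow> nat) \<Rightarrow> ('a list \<Rightarrow> nat) \<Rightarrow> 'b \<Rightarrow> nat \<Rightarrow> nat" where
  "count_n E r stg lab N j k =
     (\<Sum>xs\<in>{xs \<in> rl_paths E r. path_edges xs \<inter> stage_edges E stg lab j k \<noteq> {}}. N xs)"

definition alpha_jk ::
  "('a \<times> 'a) set \<Rightarrow> 'a \<Rightarrow> ('a \<Rightarrow> 'b) \<Rightarrow> ('a \<times> 'a \<Rightarrow> nat) \<Rightarrow> real \<Rightarrow> 'b \<Rightarrow> nat \<Rightarrow> real" where
  "alpha_jk E r stg lab \<alpha> j k =
     \<alpha> / real (card (rl_paths E r)) *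
       (\<Sum>e\<in>stage_edges E stg lab j k. real (card (paths_through E r e)))"

definition BDepu ::
  "('a \<times> 'a) set \<Rightarrow> 'a \<Rightarrow> ('a \<Rightarrow> 'b) \<Rightarrow> ('a \<times> 'a \<Rightarrow> nat) \<Rightarrow> real \<Rightarrow> ('a list \<Rightarrow> nat) \<Rightarrow> real" where
  "BDepu E r stg lab \<alpha> N =
     (\<Prod>j\<in>stages E stg.
        (let rj = stage_deg E stg j;
             abar = (\<Sum>k=1..rj. alpha_jk E r stg lab \<alpha> j k);
             nbar = (\<Sum>k=1..rj. real (count_n E r stg lab N j k))
         in Gamma abar / Gamma (abar + nbar) *
            (\<Prod>k=1..rj. Gamma (alpha_jk E r stg lab \<alpha> j k + real (count_n E r stg lab N j k))
                          / Gamma (alpha_jk E r stg lab \<alpha> j k))))"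

definition subleaves :: "('a \<times> 'a) set \<Rightarrow> 'a set \<Rightarrow> 'a set" where
  "subleaves E T = {v \<in> T. children E v \<inter> T = {}}"

text \<open>We require s itself not to be a subleaf (the subtree is non-trivial).\<close>
definition subtree :: "'a set \<Rightarrow> ('a \<times> 'a) set \<Rightarrow> 'a \<Rightarrow> 'a set \<Rightarrow> bool" where
  "subtree V E s T \<longleftrightarrow> s \<in> situations E \<and> T \<subseteq> V \<and> s \<in> T
     \<and> (\<forall>v\<in>T. (s, v) \<in> E\<^sup>*)
     \<and> (\<forall>v\<in>T - {s}. \<exists>u\<in>T. (u, v) \<in> E)
     \<and> (\<forall>v\<in>T. children E v \<subseteq> T \<or> children E v \<inter> T = {})
     \<and> s \<notin> subleaves E T"

definition saturated :: "('a \<times> 'a) set \<Rightarrow> ('a \<Rightarrow> 'b) \<Rightarrow> 'a set \<Rightarrow> bool" where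
  "saturated E stg T \<longleftrightarrow>
     (\<forall>v\<in>T - subleaves E T. \<forall>w\<in>situations E. stg w = stg v \<longrightarrow> w = v)"

definition interior :: "('a \<times> 'a) set \<Rightarrow> 'a \<Rightarrow> 'a set \<Rightarrow> 'a set" where
  "interior E s T = T - {s} - subleaves E T"

definition resize_nodes :: "'a set \<Rightarrow> ('a \<times> 'a) set \<Rightarrow> 'a \<Rightarrow> 'a set \<Rightarrow> 'a set" where
  "resize_nodes V E s T = V - interior E s T"

definition resize_edges :: "('a \<times> 'a) set \<Rightarrow> 'a \<Rightarrow> 'a set \<Rightarrow> ('a \<times> 'a) set" where
  "resize_edges E s T = {e \<in> E. fst e \<notin> T - subleaves E T} \<union> {(s, l) | l. l \<in> subleaves E T}"

text \<open>The bijection of root-to-leaf paths induced by the resize: drop the interior nodes.\<close>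
definition contract_path :: "('a \<times> 'a) set \<Rightarrow> 'a \<Rightarrow> 'a set \<Rightarrow> 'a list \<Rightarrow> 'a list" where
  "contract_path E s T xs = filter (\<lambda>x. x \<notin> interior E s T) xs"

end

theory Submission
  imports Defs
begin


definition ptree :: "('a \<times> 'a) set \<Rightarrow> 'a \<Rightarrow> bool" where
  "ptree E r \<longleftrightarrow> (\<forall>v. (v, r) \<notin> E) \<and> (\<forall>u1 u2 w. (u1, w) \<in> E \<longrightarrow> (u2, w) \<in> E \<longrightarrow> u1 = u2)"

abbreviation walk :: "('a \<times> 'a) set \<Rightarrow> 'a list \<Rightarrow> bool" where
  "walk E xs \<equiv> successively (\<lambda>x y. (x, y) \<in> E) xs"

lemma rl_paths_alt:
  "xs \<in> rl_paths E r \<longleftrightarrow> xs \<noteq> [] \<and> hd xs = r \<and> walk E xs \<and> children E (last xs) = {}"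
  unfolding rl_paths_def successively_conv_nth by auto

lemma walk_unique:
  assumes pt: "ptree E r" and wx: "walk E xs" and wy: "walk E ys"
    and ne: "xs \<noteq> []" "ys \<noteq> []" and h: "hd xs = r" "hd ys = r"
  shows "i < length xs \<Longrightarrow> j < length ys \<Longrightarrow> xs ! i = ys ! j \<Longrightarrow>
         i = j \<and> take (Suc i) xs = take (Suc j) ys"
proof (induction i arbitrary: j)
  case 0
  have x0: "xs ! 0 = r" using ne h by (simp add: hd_conv_nth)
  have y0: "ys ! 0 = r" using ne h by (simp add: hd_conv_nth)
  show ?case
  proof (cases j)
    case 0
    then show ?thesis using x0 y0 ne by (simp add: take_Suc_conv_app_nth)
  next
    case (Suc j')
    have "(ys ! j', ys ! Suc j') \<in> E" using successively_nth[OF wy] "0.prems" Suc by simp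
    then show ?thesis using "0.prems" Suc x0 pt unfolding ptree_def by auto
  qed
next
  case (Suc i)
  have e1: "(xs ! i, xs ! Suc i) \<in> E" using successively_nth[OF wx Suc.prems(1)] .
  have y0: "ys ! 0 = r" using ne h by (simp add: hd_conv_nth)
  show ?case
  proof (cases j)
    case 0
    then have "xs ! Suc i = r" using Suc.prems y0 by simp
    then show ?thesis using e1 pt unfolding ptree_def by auto
  next
    case (Suc j')
    have e2: "(ys ! j', ys ! Suc j') \<in> E" using successively_nth[OF wy] Suc.prems \<open>j = Suc j'\<close> by simp
    have "xs ! i = ys ! j'" using e1 e2 Suc.prems \<open>j = Suc j'\<close> pt unfolding ptree_def by metis
    then have "i = j' \<and> take (Suc i) xs = take (Suc j') ys"
      using Suc.IH Suc.prems \<open>j = Suc j'\<close> by auto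
    then show ?thesis using Suc.prems \<open>j = Suc j'\<close> by (auto simp: take_Suc_conv_app_nth)
  qed
qed

lemma walk_distinct:
  assumes "ptree E r" "walk E xs" "xs \<noteq> []" "hd xs = r"
  shows "distinct xs"
  unfolding distinct_conv_nth using walk_unique[OF assms(1,2,2,3,3,4,4)] by blast

lemma rl_paths_last_unique:
  assumes "ptree E r" "xs \<in> rl_paths E r" "ys \<in> rl_paths E r" "last xs = last ys"
  shows "xs = ys"
proof -
  have a: "xs \<noteq> [] \<and> hd xs = r \<and> walk E xs" "ys \<noteq> [] \<and> hd ys = r \<and> walk E ys"
    using assms by (auto simp: rl_paths_alt)
  have "xs ! (length xs - 1) = ys ! (length ys - 1)" using a assms(4) by (simp add: last_conv_nth)
  then have "take (Suc (length xs - 1)) xs = take (Suc (length ys - 1)) ys"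
    using walk_unique[OF assms(1), of xs ys "length xs - 1" "length ys - 1"] a by auto
  then show ?thesis using a by simp
qed

lemma edge_in_path:
  assumes pt: "ptree E r" and xs: "xs \<in> rl_paths E r" and e: "(u, w) \<in> E"
  shows "(u, w) \<in> path_edges xs \<longleftrightarrow> w \<in> set xs"
proof
  assume "(u, w) \<in> path_edges xs"
  then show "w \<in> set xs" unfolding path_edges_def by (cases xs) (auto dest: set_zip_rightD)
next
  assume "w \<in> set xs"
  then obtain k where k: "k < length xs" "xs ! k = w" by (auto simp: in_set_conv_nth)
  have a: "xs \<noteq> [] \<and> hd xs = r \<and> walk E xs" using xs by (auto simp: rl_paths_alt)
  have "w \<noteq> r" using e pt unfolding ptree_def by auto
  then have "k \<noteq> 0"
  proof (intro notI)
    assume "k = 0" "w \<noteq> r"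
    then show False using k a by (metis hd_conv_nth)
  qed
  then obtain i where i: "k = Suc i" by (cases k) auto
  have "(xs ! i, w) \<in> E" using successively_nth[of _ xs i] a k i by auto
  then have "xs ! i = u" using e pt unfolding ptree_def by auto
  then show "(u, w) \<in> path_edges xs" unfolding path_edges_def in_set_zip
    using k i by (auto simp: nth_tl intro!: exI[of _ i])
qed

definition PW :: "('a \<times> 'a) set \<Rightarrow> 'a \<Rightarrow> 'a set \<Rightarrow> 'a list set" where
  "PW E r W = {xs \<in> rl_paths E r. set xs \<inter> W \<noteq> {}}"

lemma paths_through_PW:
  assumes "ptree E r" "e \<in> E"
  shows "paths_through E r e = PW E r {snd e}"
  using edge_in_path[OF assms(1) _, of _ "fst e" "snd e"] assms(2)
  unfolding paths_through_def PW_def by auto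

lemma edges_hit_PW:
  assumes "ptree E r" "S \<subseteq> E"
  shows "{xs \<in> rl_paths E r. path_edges xs \<inter> S \<noteq> {}} = PW E r (snd ` S)"
proof -
  have "\<And>xs. xs \<in> rl_paths E r \<Longrightarrow> (path_edges xs \<inter> S \<noteq> {}) = (set xs \<inter> snd ` S \<noteq> {})"
  proof -
    fix xs assume xs: "xs \<in> rl_paths E r"
    have "\<And>e. e \<in> S \<Longrightarrow> e \<in> path_edges xs \<longleftrightarrow> snd e \<in> set xs"
      using edge_in_path[OF assms(1) xs] assms(2) by (metis prod.collapse subsetD)
    then show "(path_edges xs \<inter> S \<noteq> {}) = (set xs \<inter> snd ` S \<noteq> {})" by blast
  qed
  then show ?thesis unfolding PW_def by auto
qed

lemma PW_situation:
  assumes pt: "ptree E r" and v: "v \<in> situations E"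
  shows "PW E r {v} = (\<Union>w\<in>children E v. PW E r {w})"
    and "\<And>w1 w2. w1 \<in> children E v \<Longrightarrow> w2 \<in> children E v \<Longrightarrow> w1 \<noteq> w2 \<Longrightarrow>
           PW E r {w1} \<inter> PW E r {w2} = {}"
proof -
  show "PW E r {v} = (\<Union>w\<in>children E v. PW E r {w})"
  proof (intro equalityI subsetI)
    fix xs assume "xs \<in> PW E r {v}"
    then have xs: "xs \<in> rl_paths E r" "v \<in> set xs" unfolding PW_def by auto
    then have a: "xs \<noteq> [] \<and> hd xs = r \<and> walk E xs \<and> children E (last xs) = {}"
      by (auto simp: rl_paths_alt)
    obtain i where i: "i < length xs" "xs ! i = v" using xs by (auto simp: in_set_conv_nth)
    have "Suc i < length xs"
    proof (rule ccontr)
      assume "\<not> Suc i < length xs"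
      then have "i = length xs - 1" using i by simp
      then have "last xs = v" using i a by (simp add: last_conv_nth)
      then show False using a v unfolding situations_def by auto
    qed
    then have "(v, xs ! Suc i) \<in> E" using successively_nth[of _ xs i] a i by auto
    moreover have "xs ! Suc i \<in> set xs" using \<open>Suc i < length xs\<close> by simp
    ultimately show "xs \<in> (\<Union>w\<in>children E v. PW E r {w})"
      using xs unfolding PW_def children_def by auto
  next
    fix xs assume "xs \<in> (\<Union>w\<in>children E v. PW E r {w})"
    then obtain w where w: "(v, w) \<in> E" "xs \<in> rl_paths E r" "w \<in> set xs"
      unfolding PW_def children_def by auto
    then have "(v, w) \<in> path_edges xs" using edge_in_path[OF pt] by blast
    then have "v \<in> set xs" unfolding path_edges_def by (auto dest: set_zip_leftD)
    then show "xs \<in> PW E r {v}" using w unfolding PW_def by auto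
  qed
next
  fix w1 w2 assume w: "w1 \<in> children E v" "w2 \<in> children E v" "w1 \<noteq> w2"
  show "PW E r {w1} \<inter> PW E r {w2} = {}"
  proof (rule ccontr)
    assume "PW E r {w1} \<inter> PW E r {w2} \<noteq> {}"
    then obtain xs where xs: "xs \<in> rl_paths E r" "w1 \<in> set xs" "w2 \<in> set xs"
      unfolding PW_def by auto
    have e1: "(v, w1) \<in> path_edges xs" "(v, w2) \<in> path_edges xs"
      using edge_in_path[OF pt xs(1)] xs w unfolding children_def by auto
    have a: "xs \<noteq> [] \<and> hd xs = r \<and> walk E xs" using xs by (auto simp: rl_paths_alt)
    have d: "distinct xs" using walk_distinct[OF pt] a by auto
    obtain i where i: "xs ! i = v" "xs ! Suc i = w1" "Suc i < length xs"
      using e1(1) unfolding path_edges_def in_set_zip by (auto simp: nth_tl)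
    obtain j where j: "xs ! j = v" "xs ! Suc j = w2" "Suc j < length xs"
      using e1(2) unfolding path_edges_def in_set_zip by (auto simp: nth_tl)
    have "i = j" using d i j by (metis Suc_lessD nth_eq_iff_index_eq)
    then show False using i j w by simp
  qed
qed

lemma walk_of_rtrancl:
  "(a, b) \<in> E\<^sup>* \<Longrightarrow> \<exists>xs. xs \<noteq> [] \<and> hd xs = a \<and> last xs = b \<and> walk E xs"
proof (induction rule: rtrancl_induct)
  case base
  then show ?case by (intro exI[of _ "[a]"]) auto
next
  case (step y z)
  then obtain xs where xs: "xs \<noteq> [] \<and> hd xs = a \<and> last xs = y \<and> walk E xs" by auto
  then show ?case using step by (intro exI[of _ "xs @ [z]"]) (auto simp: successively_append_iff)
qed

lemma no_cycle:
  assumes pt: "ptree E r" and "(r, x) \<in> E\<^sup>*" and "(x, x) \<in> E\<^sup>+"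
  shows False
proof -
  obtain c where c: "(x, c) \<in> E" "(c, x) \<in> E\<^sup>*" using assms(3) by (auto dest: tranclD)
  obtain xs where xs: "xs \<noteq> [] \<and> hd xs = r \<and> last xs = x \<and> walk E xs"
    using walk_of_rtrancl[OF assms(2)] by auto
  obtain ys where ys: "ys \<noteq> [] \<and> hd ys = c \<and> last ys = x \<and> walk E ys"
    using walk_of_rtrancl[OF c(2)] by auto
  have w: "walk E (xs @ ys)" using xs ys c by (auto simp: successively_append_iff)
  have d: "distinct (xs @ ys)" using walk_distinct[OF pt w] xs by auto
  have "x \<in> set xs" "x \<in> set ys" using xs ys by (metis last_in_set)+
  then show False using d by auto
qed

lemma finite_rl_paths:
  assumes pt: "ptree E r" and "finite V" "r \<in> V" "E \<subseteq> V \<times> V"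
  shows "finite (rl_paths E r)"
proof -
  have "last ` rl_paths E r \<subseteq> V"
  proof
    fix y assume "y \<in> last ` rl_paths E r"
    then obtain xs where xs: "xs \<in> rl_paths E r" "y = last xs" by auto
    then have a: "xs \<noteq> [] \<and> hd xs = r \<and> walk E xs" by (auto simp: rl_paths_alt)
    show "y \<in> V"
    proof (cases "length xs = 1")
      case True
      then have "xs = [r]" using a by (cases xs) auto
      then show ?thesis using xs assms by simp
    next
      case False
      then have "Suc (length xs - 2) < length xs" "Suc (length xs - 2) = length xs - 1"
        using a by (cases xs; auto)+
      then have "(xs ! (length xs - 2), xs ! (length xs - 1)) \<in> E"
        using successively_nth[of _ xs "length xs - 2"] a by auto
      then show ?thesis using xs a assms(4) by (auto simp: last_conv_nth)
    qed
  qed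
  moreover have "inj_on last (rl_paths E r)"
    using rl_paths_last_unique[OF pt] by (auto simp: inj_on_def)
  ultimately show ?thesis using assms(2) by (metis finite_imageD finite_subset)
qed

lemma extend_to_leaf:
  assumes pt: "ptree E r" and fin: "finite V" and EV: "E \<subseteq> V \<times> V"
  shows "xs \<noteq> [] \<Longrightarrow> hd xs = r \<Longrightarrow> walk E xs \<Longrightarrow> set xs \<subseteq> V \<Longrightarrow>
         \<exists>ys. xs @ ys \<in> rl_paths E r"
proof (induction "card V - length xs" arbitrary: xs rule: less_induct)
  case less
  show ?case
  proof (cases "children E (last xs) = {}")
    case True
    then show ?thesis using less.prems by (intro exI[of _ "[]"]) (auto simp: rl_paths_alt)
  next
    case False
    then obtain w where w: "(last xs, w) \<in> E" unfolding children_def by auto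
    have w2: "walk E (xs @ [w])" using less.prems w by (auto simp: successively_append_iff)
    have d: "distinct (xs @ [w])" using walk_distinct[OF pt w2] less.prems by auto
    have sv: "set (xs @ [w]) \<subseteq> V" using less.prems w EV by auto
    have "length (xs @ [w]) \<le> card V"
      using d sv fin by (metis card_mono distinct_card)
    then have "card V - length (xs @ [w]) < card V - length xs" by simp
    then obtain ys where "(xs @ [w]) @ ys \<in> rl_paths E r"
      using less.hyps[of "xs @ [w]"] less.prems w2 sv by auto
    then show ?thesis by (intro exI[of _ "w # ys"]) simp
  qed
qed

lemma exists_path:
  assumes ev: "event_tree V E r" and pt: "ptree E r" and v: "v \<in> V"
  shows "PW E r {v} \<noteq> {}"
proof -
  have "(r, v) \<in> E\<^sup>*" using ev v unfolding event_tree_def by auto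
  then obtain xs where xs: "xs \<noteq> [] \<and> hd xs = r \<and> last xs = v \<and> walk E xs"
    using walk_of_rtrancl by metis
  have "set xs \<subseteq> V"
  proof
    fix y assume "y \<in> set xs"
    then obtain k where k: "k < length xs" "xs ! k = y" by (auto simp: in_set_conv_nth)
    show "y \<in> V"
    proof (cases k)
      case 0 then show ?thesis using k xs ev by (auto simp: event_tree_def hd_conv_nth)
    next
      case (Suc i)
      then have "(xs ! i, xs ! k) \<in> E" using successively_nth[of _ xs i] xs k by auto
      then show ?thesis using ev k unfolding event_tree_def by auto
    qed
  qed
  then obtain ys where "xs @ ys \<in> rl_paths E r"
    using extend_to_leaf[OF pt, of V xs] xs ev unfolding event_tree_def by auto
  then show ?thesis using xs unfolding PW_def by auto
qed



lemma filter_successively: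
  assumes "\<And>i j. i < j \<Longrightarrow> j < length xs \<Longrightarrow> P (xs ! i) \<Longrightarrow> P (xs ! j) \<Longrightarrow>
             (\<forall>k. i < k \<and> k < j \<longrightarrow> \<not> P (xs ! k)) \<Longrightarrow> R (xs ! i) (xs ! j)"
  shows "successively R (filter P xs)"
  using assms
proof (induction xs)
  case Nil
  then show ?case by simp
next
  case (Cons x xs)
  have IH: "successively R (filter P xs)"
  proof (rule Cons.IH)
    fix i j assume h: "i < j" "j < length xs" "P (xs ! i)" "P (xs ! j)"
      "\<forall>k. i < k \<and> k < j \<longrightarrow> \<not> P (xs ! k)"
    have "\<forall>k. Suc i < k \<and> k < Suc j \<longrightarrow> \<not> P ((x # xs) ! k)"
    proof (intro allI impI)
      fix k assume "Suc i < k \<and> k < Suc j"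
      then obtain k' where "k = Suc k'" "i < k'" "k' < j" by (cases k) auto
      then show "\<not> P ((x # xs) ! k)" using h(5) by simp
    qed
    then show "R (xs ! i) (xs ! j)" using Cons.prems[of "Suc i" "Suc j"] h by simp
  qed
  show ?case
  proof (cases "P x")
    case False
    then show ?thesis using IH by simp
  next
    case True
    show ?thesis
    proof (cases "filter P xs")
      case Nil
      then show ?thesis using True by simp
    next
      case (Cons y ys)
      then obtain us vs where uv: "xs = us @ y # vs" "\<forall>u\<in>set us. \<not> P u" "P y"
        by (auto simp: filter_eq_Cons_iff)
      have "R ((x # xs) ! 0) ((x # xs) ! Suc (length us))"
      proof (rule Cons.prems)
        show "0 < Suc (length us)" by simp
        show "Suc (length us) < length (x # xs)" using uv by simp
        show "P ((x # xs) ! 0)" using True by simp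
        show "P ((x # xs) ! Suc (length us))" using uv by (simp add: nth_append)
        show "\<forall>k. 0 < k \<and> k < Suc (length us) \<longrightarrow> \<not> P ((x # xs) ! k)"
        proof (intro allI impI)
          fix k assume "0 < k \<and> k < Suc (length us)"
          then obtain k' where "k = Suc k'" "k' < length us" by (cases k) auto
          then show "\<not> P ((x # xs) ! k)" using uv by (simp add: nth_append)
        qed
      qed
      then have "R x y" using uv by (simp add: nth_append)
      then show ?thesis using True IH Cons by (simp add: successively_Cons)
    qed
  qed
qed

lemma last_filter_keep:
  assumes "xs \<noteq> []" "P (last xs)"
  shows "last (filter P xs) = last xs"
proof -
  have "xs = butlast xs @ [last xs]" using assms by simp
  then have "filter P xs = filter P (butlast xs) @ [last xs]"
    using assms by (metis filter.simps filter_append)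
  then show ?thesis by simp
qed

locale rsz =
  fixes V :: "'a set" and E :: "('a \<times> 'a) set" and r :: 'a
    and stg :: "'a \<Rightarrow> 'b" and lab lab' :: "'a \<times> 'a \<Rightarrow> nat"
    and s :: 'a and T :: "'a set"
  assumes st: "staged_tree V E r stg lab"
    and sub: "subtree V E s T"
    and sat: "saturated E stg T"
    and lab'_eq: "\<forall>e\<in>resize_edges E s T. fst e \<noteq> s \<longrightarrow> lab' e = lab e"
    and lab'_bij: "bij_betw (\<lambda>l. lab' (s, l)) (subleaves E T) {1..card (subleaves E T)}"
begin

abbreviation "LL \<equiv> subleaves E T"
abbreviation "TI \<equiv> T - subleaves E T"
abbreviation "Inn \<equiv> interior E s T"
abbreviation "E' \<equiv> resize_edges E s T"
abbreviation "ctr \<equiv> contract_path E s T"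

lemma ev: "event_tree V E r" using st unfolding staged_tree_def by auto

lemma finV: "finite V" and rV: "r \<in> V" and EV: "E \<subseteq> V \<times> V"
  and reach: "\<And>v. v \<in> V \<Longrightarrow> (r, v) \<in> E\<^sup>*"
  using ev unfolding event_tree_def by auto

lemma pt: "ptree E r"
  unfolding ptree_def
proof (intro conjI allI impI)
  show "\<And>v. (v, r) \<notin> E" using ev unfolding event_tree_def by auto
  fix u1 u2 w assume "(u1, w) \<in> E" "(u2, w) \<in> E"
  moreover then have "w \<in> V - {r}" using ev unfolding event_tree_def by auto
  ultimately show "u1 = u2" using ev unfolding event_tree_def by metis
qed

lemma TV: "T \<subseteq> V" and finT: "finite T" and sT: "s \<in> T"
  and sV: "s \<in> V" and sTI: "s \<in> TI" and LT: "LL \<subseteq> T"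
  using sub finV unfolding subtree_def subleaves_def by (auto intro: finite_subset)

lemma TI_sit: "v \<in> TI \<Longrightarrow> v \<in> situations E \<and> children E v \<subseteq> T"
  using sub unfolding subtree_def subleaves_def situations_def by blast

lemma sit_V: "situations E \<subseteq> V"
  using EV unfolding situations_def children_def by auto

lemma parent_TI: "w \<in> T \<Longrightarrow> w \<noteq> s \<Longrightarrow> (u, w) \<in> E \<Longrightarrow> u \<in> TI"
proof -
  assume a: "w \<in> T" "w \<noteq> s" "(u, w) \<in> E"
  then have "w \<in> T - {s}" by auto
  then obtain u' where u': "u' \<in> T" "(u', w) \<in> E" using sub unfolding subtree_def by blast
  then have "u = u'" using a pt unfolding ptree_def by auto
  then show "u \<in> TI" using u' a unfolding subleaves_def children_def by auto
qed

lemma no_s_child: "v \<in> T \<Longrightarrow> (v, s) \<notin> E"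
proof
  assume a: "v \<in> T" "(v, s) \<in> E"
  then have "(s, v) \<in> E\<^sup>*" using sub unfolding subtree_def by auto
  then have "(s, s) \<in> E\<^sup>+" using a by auto
  then show False using no_cycle[OF pt reach[OF sV]] by auto
qed

lemma Inn_eq: "Inn = TI - {s}" unfolding interior_def by auto

lemma E'_eq: "E' = {e \<in> E. fst e \<notin> TI} \<union> {(s, l) | l. l \<in> LL}"
  unfolding resize_edges_def by auto

lemma children_E': "children E' v = (if v = s then LL else if v \<in> TI then {} else children E v)"
  unfolding E'_eq children_def using sTI by auto

lemma r_notin_T: "r \<in> T \<Longrightarrow> r = s"
  using sub pt unfolding subtree_def ptree_def by auto

lemma Inn_no_parent: "w \<in> Inn \<Longrightarrow> (u, w) \<notin> E'"
  unfolding E'_eq Inn_eq using parent_TI by auto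

lemma pt': "ptree E' r"
  unfolding ptree_def
proof (intro conjI allI impI)
  fix v show "(v, r) \<notin> E'"
  proof
    assume "(v, r) \<in> E'"
    then have "(v, r) \<in> E \<or> (v = s \<and> r \<in> LL)" unfolding E'_eq by auto
    then show False using pt r_notin_T LT sTI unfolding ptree_def by auto
  qed
next
  fix u1 u2 w assume a: "(u1, w) \<in> E'" "(u2, w) \<in> E'"
  have key: "\<And>u. (u, w) \<in> E' \<Longrightarrow> w \<in> LL \<Longrightarrow> u = s"
  proof -
    fix u assume b: "(u, w) \<in> E'" "w \<in> LL"
    have "w \<noteq> s" using b sTI by auto
    show "u = s"
    proof (rule ccontr)
      assume "u \<noteq> s"
      then have "(u, w) \<in> E" "u \<notin> TI" using b unfolding E'_eq by auto
      then show False using parent_TI b LT \<open>w \<noteq> s\<close> by auto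
    qed
  qed
  show "u1 = u2"
  proof (cases "w \<in> LL")
    case True
    then show ?thesis using key a by auto
  next
    case False
    then have "(u1, w) \<in> E" "(u2, w) \<in> E" using a unfolding E'_eq by auto
    then show ?thesis using pt unfolding ptree_def by auto
  qed
qed

lemma E'_V: "E' \<subseteq> V \<times> V"
  unfolding E'_eq using EV sV LT TV by auto

lemma fin_RP: "finite (rl_paths E r)"
  using finite_rl_paths[OF pt finV rV EV] .

lemma fin_RP': "finite (rl_paths E' r)"
  using finite_rl_paths[OF pt' finV rV E'_V] .

lemma ctr_in:
  assumes xs: "xs \<in> rl_paths E r"
  shows "ctr xs \<in> rl_paths E' r" "last (ctr xs) = last xs"
proof -
  have a: "xs \<noteq> [] \<and> hd xs = r \<and> walk E xs \<and> children E (last xs) = {}"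
    using xs by (auto simp: rl_paths_alt)
  have d: "distinct xs" using walk_distinct[OF pt] a by auto
  have lastI: "last xs \<notin> TI" using TI_sit a unfolding situations_def by auto
  then have lastInn: "last xs \<notin> Inn" using Inn_eq by auto
  show l: "last (ctr xs) = last xs"
    unfolding contract_path_def using last_filter_keep a lastInn by metis
  have rI: "r \<notin> Inn" using r_notin_T Inn_eq by auto
  have ne: "ctr xs \<noteq> []" using a lastInn unfolding contract_path_def
    by (metis filter_empty_conv last_in_set)
  have hd: "hd (ctr xs) = r"
    using a rI unfolding contract_path_def by (cases xs) auto
  have w: "walk E' (ctr xs)"
    unfolding contract_path_def
  proof (rule filter_successively)
    fix i j assume h: "i < j" "j < length xs" "xs ! i \<notin> Inn" "xs ! j \<notin> Inn"
      "\<forall>k. i < k \<and> k < j \<longrightarrow> \<not> xs ! k \<notin> Inn"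
    have e1: "(xs ! i, xs ! Suc i) \<in> E" using successively_nth[of _ xs i] a h by auto
    have e2: "(xs ! (j - 1), xs ! j) \<in> E" using successively_nth[of _ xs "j - 1"] a h by auto
    show "(xs ! i, xs ! j) \<in> E'"
    proof (cases "xs ! i \<in> TI")
      case False
      have "j = Suc i"
      proof (rule ccontr)
        assume "j \<noteq> Suc i"
        then have "xs ! Suc i \<in> Inn" using h by auto
        then have "xs ! i \<in> TI" using parent_TI e1 Inn_eq by auto
        then show False using False by simp
      qed
      then show ?thesis using e1 False unfolding E'_eq by auto
    next
      case True
      then have xi: "xs ! i = s" using h(3) Inn_eq by auto
      have "xs ! (j - 1) \<in> TI"
      proof (cases "j - 1 = i")
        case True then show ?thesis using xi sTI by simp
      next
        case False
        then have "xs ! (j - 1) \<in> Inn" using h by auto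
        then show ?thesis using Inn_eq by auto
      qed
      then have "xs ! j \<in> T" using TI_sit e2 unfolding children_def by auto
      moreover have "xs ! j \<noteq> s" using d h xi by (metis nth_eq_iff_index_eq order.strict_trans less_irrefl)
      ultimately have "xs ! j \<in> LL" using h(4) Inn_eq by auto
      then show ?thesis using xi unfolding E'_eq by auto
    qed
  qed
  have "children E' (last xs) = {}"
    using children_E' a lastI sTI by auto
  then show "ctr xs \<in> rl_paths E' r" using ne hd w l by (simp add: rl_paths_alt)
qed

lemma set_ctr: "set (ctr xs) = set xs - Inn"
  unfolding contract_path_def by auto

end


context rsz begin

lemma children_fin: "finite (children E v)"
proof -
  have "children E v \<subseteq> V" using EV unfolding children_def by auto
  then show ?thesis using finV by (rule finite_subset)
qed

lemma ch_union: "(\<Union>v\<in>TI. children E v) = T - {s}"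
proof (intro equalityI subsetI)
  fix w assume "w \<in> (\<Union>v\<in>TI. children E v)"
  then obtain v where v: "v \<in> TI" "(v, w) \<in> E" unfolding children_def by auto
  then have "w \<in> T" using TI_sit unfolding children_def by auto
  moreover have "w \<noteq> s" using no_s_child v by auto
  ultimately show "w \<in> T - {s}" by auto
next
  fix w assume w: "w \<in> T - {s}"
  then obtain u where "u \<in> T" "(u, w) \<in> E" using sub unfolding subtree_def by blast
  then have "u \<in> TI" using parent_TI w by auto
  then show "w \<in> (\<Union>v\<in>TI. children E v)" using \<open>(u, w) \<in> E\<close> unfolding children_def by auto
qed

lemma ch_disj: "v1 \<in> TI \<Longrightarrow> v2 \<in> TI \<Longrightarrow> v1 \<noteq> v2 \<Longrightarrow> children E v1 \<inter> children E v2 = {}"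
  using pt unfolding ptree_def children_def by auto

lemma T_split: "T - {s} = (TI - {s}) \<union> LL" "(TI - {s}) \<inter> LL = {}"
  using LT sTI by auto

lemma finTI: "finite TI" using finT by auto
lemma finLL: "finite LL" using finT LT by (rule finite_subset[rotated])

lemma tele_sum:
  fixes g :: "'a \<Rightarrow> real"
  assumes "\<forall>v\<in>TI. g v = (\<Sum>w\<in>children E v. g w)"
  shows "g s = (\<Sum>l\<in>LL. g l)"
proof -
  have "(\<Sum>v\<in>TI. g v) = (\<Sum>v\<in>TI. \<Sum>w\<in>children E v. g w)" using assms by simp
  also have "\<dots> = (\<Sum>w\<in>(\<Union>v\<in>TI. children E v). g w)"
    by (rule sum.UNION_disjoint[symmetric]) (use finTI children_fin ch_disj in auto)
  also have "\<dots> = (\<Sum>w\<in>TI - {s}. g w) + (\<Sum>l\<in>LL. g l)"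
    unfolding ch_union T_split(1) by (rule sum.union_disjoint) (use finTI finLL T_split in auto)
  finally show ?thesis using sum.remove[OF finTI sTI, of g] by simp
qed

lemma tele_prod:
  fixes G :: "'a \<Rightarrow> real"
  assumes nz: "\<forall>v\<in>TI. G v \<noteq> 0"
  shows "(\<Prod>v\<in>TI. inverse (G v) * (\<Prod>w\<in>children E v. G w)) = inverse (G s) * (\<Prod>l\<in>LL. G l)"
proof -
  have "(\<Prod>v\<in>TI. \<Prod>w\<in>children E v. G w) = (\<Prod>w\<in>(\<Union>v\<in>TI. children E v). G w)"
    by (rule prod.UNION_disjoint[symmetric]) (use finTI children_fin ch_disj in auto)
  also have "\<dots> = (\<Prod>w\<in>TI - {s}. G w) * (\<Prod>l\<in>LL. G l)"
    unfolding ch_union T_split(1) by (rule prod.union_disjoint) (use finTI finLL T_split in auto)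
  finally have a: "(\<Prod>v\<in>TI. \<Prod>w\<in>children E v. G w) = (\<Prod>w\<in>TI - {s}. G w) * (\<Prod>l\<in>LL. G l)" .
  have b: "(\<Prod>v\<in>TI. G v) = G s * (\<Prod>w\<in>TI - {s}. G w)" using prod.remove[OF finTI sTI] .
  have nz2: "(\<Prod>w\<in>TI - {s}. G w) \<noteq> 0" using nz finTI by auto
  have "(\<Prod>v\<in>TI. inverse (G v) * (\<Prod>w\<in>children E v. G w))
      = inverse (\<Prod>v\<in>TI. G v) * (\<Prod>v\<in>TI. \<Prod>w\<in>children E v. G w)"
    by (simp add: prod.distrib prod_inversef[unfolded comp_def])
  also have "\<dots> = inverse (G s) * (\<Prod>l\<in>LL. G l)"
    unfolding a b using nz2 by (simp add: field_simps)
  finally show ?thesis .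
qed

abbreviation "CC E0 w \<equiv> card (PW E0 r {w})"
abbreviation "MM E0 N0 w \<equiv> (\<Sum>xs\<in>PW E0 r {w}. N0 xs)"

lemma PW_fin: "finite (PW E r W)" using fin_RP unfolding PW_def by auto
lemma PW_fin': "finite (PW E' r W)" using fin_RP' unfolding PW_def by auto

lemma CC_split: "v \<in> situations E \<Longrightarrow> CC E v = (\<Sum>w\<in>children E v. CC E w)"
  unfolding PW_situation(1)[OF pt] 
  by (rule card_UN_disjoint) (use children_fin PW_fin PW_situation(2)[OF pt] in auto)

lemma MM_split: "v \<in> situations E \<Longrightarrow> MM E N v = (\<Sum>w\<in>children E v. MM E N w)"
  unfolding PW_situation(1)[OF pt]
  by (rule sum.UNION_disjoint) (use children_fin PW_fin PW_situation(2)[OF pt] in auto)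

lemma CC_pos: "v \<in> V \<Longrightarrow> CC E v > 0"
  using exists_path[OF ev pt] PW_fin by (simp add: card_gt_0_iff)

lemma CC_tele: "real (CC E s) = (\<Sum>l\<in>LL. real (CC E l))"
  by (rule tele_sum[where g = "\<lambda>w. real (CC E w)"]) (use CC_split TI_sit in auto)

lemma MM_tele: "real (MM E N s) = (\<Sum>l\<in>LL. real (MM E N l))"
  by (rule tele_sum[where g = "\<lambda>w. real (MM E N w)"]) (use MM_split TI_sit in auto)

lemma LL_ne: "LL \<noteq> {}"
  using CC_tele CC_pos[OF sV] by auto

lemma ctr_bij: "bij_betw ctr (rl_paths E r) (rl_paths E' r)"
  unfolding bij_betw_def
proof (intro conjI)
  show "inj_on ctr (rl_paths E r)"
    using ctr_in rl_paths_last_unique[OF pt] by (metis inj_onI)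
  show "ctr ` rl_paths E r = rl_paths E' r"
  proof (intro equalityI subsetI)
    fix ys assume "ys \<in> ctr ` rl_paths E r"
    then show "ys \<in> rl_paths E' r" using ctr_in by auto
  next
    fix ys assume ys: "ys \<in> rl_paths E' r"
    have a: "ys \<noteq> [] \<and> hd ys = r \<and> walk E' ys \<and> children E' (last ys) = {}"
      using ys by (auto simp: rl_paths_alt)
    define l where "l = last ys"
    have lInn: "l \<notin> Inn \<and> l \<in> V"
    proof (cases "length ys = 1")
      case True
      then have "ys = [r]" using a by (cases ys) auto
      then show ?thesis using r_notin_T Inn_eq rV unfolding l_def by auto
    next
      case False
      then have "Suc (length ys - 2) < length ys" "Suc (length ys - 2) = length ys - 1"
        using a by (cases ys; auto)+
      then have "(ys ! (length ys - 2), l) \<in> E'"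
        using successively_nth[of _ ys "length ys - 2"] a unfolding l_def by (auto simp: last_conv_nth)
      then show ?thesis using Inn_no_parent E'_V by auto
    qed
    have "l \<noteq> s" using a LL_ne children_E' unfolding l_def by auto
    then have lTI: "l \<notin> TI" using lInn Inn_eq by auto
    then have lch: "children E l = {}" using a children_E' \<open>l \<noteq> s\<close> unfolding l_def by auto
    obtain xs where xs: "xs \<noteq> [] \<and> hd xs = r \<and> last xs = l \<and> walk E xs"
      using walk_of_rtrancl[OF reach] lInn by metis
    then have xsR: "xs \<in> rl_paths E r" using lch by (auto simp: rl_paths_alt)
    then have "ctr xs \<in> rl_paths E' r" "last (ctr xs) = l" using ctr_in xs by auto
    then have "ctr xs = ys" using rl_paths_last_unique[OF pt' _ ys] unfolding l_def by auto
    then show "ys \<in> ctr ` rl_paths E r" using xsR by auto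
  qed
qed

lemma ctr_PW:
  assumes "W \<inter> Inn = {}"
  shows "bij_betw ctr (PW E r W) (PW E' r W)"
proof -
  have sW: "\<And>xs. set (ctr xs) \<inter> W = set xs \<inter> W" using assms set_ctr by auto
  show ?thesis
    unfolding bij_betw_def
  proof
    show "inj_on ctr (PW E r W)"
      using ctr_bij unfolding bij_betw_def PW_def by (auto intro: inj_on_subset)
    show "ctr ` PW E r W = PW E' r W"
    proof (intro equalityI subsetI)
      fix ys assume "ys \<in> ctr ` PW E r W"
      then show "ys \<in> PW E' r W" using ctr_in sW unfolding PW_def by auto
    next
      fix ys assume ys: "ys \<in> PW E' r W"
      then obtain xs where xs: "xs \<in> rl_paths E r" "ys = ctr xs"
        using ctr_bij unfolding bij_betw_def PW_def by auto
      then have "xs \<in> PW E r W" using ys sW[of xs] unfolding PW_def by auto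
      then show "ys \<in> ctr ` PW E r W" using xs by auto
    qed
  qed
qed

lemma card_RP: "card (rl_paths E' r) = card (rl_paths E r)"
  using bij_betw_same_card[OF ctr_bij] by simp

end


definition stagefac ::
  "('a \<times> 'a) set \<Rightarrow> 'a \<Rightarrow> ('a \<Rightarrow> 'b) \<Rightarrow> ('a \<times> 'a \<Rightarrow> nat) \<Rightarrow> real \<Rightarrow> ('a list \<Rightarrow> nat) \<Rightarrow> 'b \<Rightarrow> real" where
  "stagefac E r stg lab \<alpha> N j =
        (let rj = stage_deg E stg j;
             abar = (\<Sum>k=1..rj. alpha_jk E r stg lab \<alpha> j k);
             nbar = (\<Sum>k=1..rj. real (count_n E r stg lab N j k))
         in Gamma abar / Gamma (abar + nbar) *
            (\<Prod>k=1..rj. Gamma (alpha_jk E r stg lab \<alpha> j k + real (count_n E r stg lab N j k))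
                          / Gamma (alpha_jk E r stg lab \<alpha> j k)))"

lemma BDepu_alt: "BDepu E r stg lab \<alpha> N = (\<Prod>j\<in>stages E stg. stagefac E r stg lab \<alpha> N j)"
  unfolding BDepu_def stagefac_def by simp

lemma singleton_stage:
  assumes pt: "ptree E r" and mem: "stage_members E stg (stg v) = {v}"
    and bij: "bij_betw (\<lambda>w. lab (v, w)) (children E v) {1..card (children E v)}"
  shows "stagefac E r stg lab \<alpha> N (stg v) =
    Gamma (\<Sum>w\<in>children E v. \<alpha> / real (card (rl_paths E r)) * real (card (PW E r {w})))
    / Gamma ((\<Sum>w\<in>children E v. \<alpha> / real (card (rl_paths E r)) * real (card (PW E r {w})))
             + (\<Sum>w\<in>children E v. real (\<Sum>xs\<in>PW E r {w}. N xs)))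
    * (\<Prod>w\<in>children E v. Gamma (\<alpha> / real (card (rl_paths E r)) * real (card (PW E r {w}))
                                   + real (\<Sum>xs\<in>PW E r {w}. N xs))
                         / Gamma (\<alpha> / real (card (rl_paths E r)) * real (card (PW E r {w}))))"
proof -
  have deg: "stage_deg E stg (stg v) = card (children E v)"
    unfolding stage_deg_def mem by simp
  have se: "\<And>w. w \<in> children E v \<Longrightarrow> stage_edges E stg lab (stg v) (lab (v, w)) = {(v, w)}"
  proof -
    fix w assume w: "w \<in> children E v"
    show "stage_edges E stg lab (stg v) (lab (v, w)) = {(v, w)}"
    proof (intro equalityI subsetI)
      fix e assume "e \<in> stage_edges E stg lab (stg v) (lab (v, w))"
      then have e: "e \<in> E" "fst e = v" "lab e = lab (v, w)"
        unfolding stage_edges_def mem by auto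
      then have "snd e \<in> children E v" unfolding children_def by (metis mem_Collect_eq prod.collapse)
      then have "snd e = w" using e w bij unfolding bij_betw_def inj_on_def by (metis prod.collapse)
      then show "e \<in> {(v, w)}" using e by (metis prod.collapse singletonI)
    next
      fix e assume "e \<in> {(v, w)}"
      then show "e \<in> stage_edges E stg lab (stg v) (lab (v, w))"
        using w unfolding stage_edges_def mem children_def by auto
    qed
  qed
  have ak: "\<And>w. w \<in> children E v \<Longrightarrow> alpha_jk E r stg lab \<alpha> (stg v) (lab (v, w))
      = \<alpha> / real (card (rl_paths E r)) * real (card (PW E r {w}))"
    unfolding alpha_jk_def using se paths_through_PW[OF pt] unfolding children_def by auto
  have nk: "\<And>w. w \<in> children E v \<Longrightarrow> count_n E r stg lab N (stg v) (lab (v, w))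
      = (\<Sum>xs\<in>PW E r {w}. N xs)"
  proof -
    fix w assume w: "w \<in> children E v"
    then have "(v, w) \<in> E" unfolding children_def by auto
    then show "count_n E r stg lab N (stg v) (lab (v, w)) = (\<Sum>xs\<in>PW E r {w}. N xs)"
      unfolding count_n_def se[OF w] using edges_hit_PW[OF pt, of "{(v, w)}"] by simp
  qed
  have r1: "\<And>f. (\<Sum>k=1..card (children E v). f k) = (\<Sum>w\<in>children E v. f (lab (v, w)))"
    using sum.reindex_bij_betw[OF bij] by metis
  have r2: "\<And>f. (\<Prod>k=1..card (children E v). f k) = (\<Prod>w\<in>children E v. f (lab (v, w)))"
    using prod.reindex_bij_betw[OF bij] by metis
  show ?thesis
    unfolding stagefac_def Let_def deg r1 r2
    by (simp add: ak nk cong: sum.cong prod.cong)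
qed



context rsz begin

lemma sat_uniq: "v \<in> TI \<Longrightarrow> w \<in> situations E \<Longrightarrow> stg w = stg v \<Longrightarrow> w = v"
  using sat unfolding saturated_def by blast

lemma TI_sub_sit: "TI \<subseteq> situations E" using TI_sit by auto

lemma sit_E': "situations E' = (situations E - TI) \<union> {s}"
  unfolding situations_def children_E' using LL_ne sTI by auto

lemma fin_sit: "finite (situations E)" using sit_V finV by (rule finite_subset)

lemma stg_disj: "stg ` (situations E - TI) \<inter> stg ` TI = {}"
  using sat_uniq by auto

lemma stg_s_notin: "stg s \<notin> stg ` (situations E - TI)"
proof
  assume "stg s \<in> stg ` (situations E - TI)"
  then obtain v where v: "v \<in> situations E - TI" "stg s = stg v" by (rule imageE)
  then have "v = s" using sat_uniq[OF sTI, of v] by auto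
  then show False using sTI v by auto
qed

lemma inj_stg: "inj_on stg TI"
  using sat_uniq TI_sub_sit unfolding inj_on_def by blast

lemma Inn_parent_free: "e \<in> E' \<Longrightarrow> snd e \<notin> Inn"
  using Inn_no_parent by (metis prod.collapse)

context
  fixes \<alpha> :: real and N N' :: "'a list \<Rightarrow> nat"
  assumes apos: "\<alpha> > 0" and NN: "\<forall>xs\<in>rl_paths E r. N' (ctr xs) = N xs"
begin

lemma MM_transfer:
  assumes "W \<inter> Inn = {}"
  shows "(\<Sum>ys\<in>PW E' r W. N' ys) = (\<Sum>xs\<in>PW E r W. N xs)"
proof -
  have "(\<Sum>ys\<in>PW E' r W. N' ys) = (\<Sum>xs\<in>PW E r W. N' (ctr xs))"
    using sum.reindex_bij_betw[OF ctr_PW[OF assms], of N'] by simp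
  also have "\<dots> = (\<Sum>xs\<in>PW E r W. N xs)"
    using NN unfolding PW_def by (intro sum.cong) auto
  finally show ?thesis .
qed

lemma CC_transfer:
  assumes "W \<inter> Inn = {}"
  shows "card (PW E' r W) = card (PW E r W)"
  using bij_betw_same_card[OF ctr_PW[OF assms]] by simp

lemma other_stage:
  assumes v0: "v0 \<in> situations E - TI"
  shows "stagefac E r stg lab \<alpha> N (stg v0) = stagefac E' r stg lab' \<alpha> N' (stg v0)"
proof -
  let ?j = "stg v0"
  have s_not: "stg s \<noteq> stg v0" using stg_s_notin v0 by auto
  have noTI: "\<forall>w \<in> situations E. stg w = stg v0 \<longrightarrow> w \<notin> TI"
  proof (intro ballI impI notI)
    fix w assume w: "w \<in> situations E" "stg w = stg v0" "w \<in> TI"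
    then have "v0 = w" using sat_uniq[of w v0] v0 by auto
    then show False using v0 w by auto
  qed
  have mem: "stage_members E' stg ?j = stage_members E stg ?j"
    unfolding stage_members_def sit_E' using s_not noTI by auto
  have memsub: "stage_members E stg ?j \<subseteq> situations E - TI"
    unfolding stage_members_def using noTI by auto
  have memne: "v0 \<in> stage_members E stg ?j" unfolding stage_members_def using v0 by auto
  have deg: "stage_deg E' stg ?j = stage_deg E stg ?j"
  proof -
    let ?w = "SOME w. w \<in> stage_members E stg ?j"
    have "?w \<in> stage_members E stg ?j" using memne by (rule someI)
    then have "?w \<notin> TI" using memsub by auto
    then have "children E' ?w = children E ?w" using children_E' sTI by auto
    then show ?thesis unfolding stage_deg_def mem by simp
  qed
  have se: "\<And>k. stage_edges E' stg lab' ?j k = stage_edges E stg lab ?j k"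
  proof -
    fix k
    have "\<And>e::'a \<times> 'a. fst e \<in> stage_members E stg ?j \<Longrightarrow> (e \<in> E' \<and> lab' e = k) = (e \<in> E \<and> lab e = k)"
    proof -
      fix e :: "'a \<times> 'a" assume "fst e \<in> stage_members E stg ?j"
      then have f: "fst e \<notin> TI" "fst e \<noteq> s" using memsub sTI by auto
      then have "e \<in> E' \<longleftrightarrow> e \<in> E" unfolding E'_eq by auto
      moreover have "e \<in> E' \<Longrightarrow> lab' e = lab e" using lab'_eq f by auto
      ultimately show "(e \<in> E' \<and> lab' e = k) = (e \<in> E \<and> lab e = k)" by auto
    qed
    then show "stage_edges E' stg lab' ?j k = stage_edges E stg lab ?j k"
      unfolding stage_edges_def mem by auto
  qed
  have seE: "\<And>k. stage_edges E stg lab ?j k \<subseteq> E" unfolding stage_edges_def by auto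
  have seE': "\<And>k. stage_edges E stg lab ?j k \<subseteq> E'" using se unfolding stage_edges_def by auto
  have ak: "\<And>k. alpha_jk E' r stg lab' \<alpha> ?j k = alpha_jk E r stg lab \<alpha> ?j k"
  proof -
    fix k
    have "\<And>e. e \<in> stage_edges E stg lab ?j k \<Longrightarrow>
        card (paths_through E' r e) = card (paths_through E r e)"
    proof -
      fix e assume e: "e \<in> stage_edges E stg lab ?j k"
      then have "e \<in> E" "e \<in> E'" using seE seE' by auto
      then show "card (paths_through E' r e) = card (paths_through E r e)"
        using paths_through_PW[OF pt] paths_through_PW[OF pt'] CC_transfer Inn_parent_free by auto
    qed
    then show "alpha_jk E' r stg lab' \<alpha> ?j k = alpha_jk E r stg lab \<alpha> ?j k"
      unfolding alpha_jk_def se card_RP by simp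
  qed
  have nk: "\<And>k. count_n E' r stg lab' N' ?j k = count_n E r stg lab N ?j k"
  proof -
    fix k
    have "snd ` stage_edges E stg lab ?j k \<inter> Inn = {}" using seE' Inn_parent_free by auto
    then show "count_n E' r stg lab' N' ?j k = count_n E r stg lab N ?j k"
      unfolding count_n_def se edges_hit_PW[OF pt seE] edges_hit_PW[OF pt' seE']
      using MM_transfer by simp
  qed
  show ?thesis unfolding stagefac_def deg ak nk ..
qed

abbreviation "beta \<equiv> \<alpha> / real (card (rl_paths E r))"
abbreviation "GG w \<equiv> Gamma (beta * real (CC E w) + real (MM E N w)) / Gamma (beta * real (CC E w))"

lemma beta_pos: "beta > 0"
proof -
  have "PW E r {s} \<subseteq> rl_paths E r" unfolding PW_def by auto
  then have "card (rl_paths E r) > 0"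
    using card_mono[OF fin_RP] CC_pos[OF sV] by (meson less_le_trans)
  then show ?thesis using apos by simp
qed

lemma GG_nz: "v \<in> V \<Longrightarrow> GG v \<noteq> 0"
proof -
  assume v: "v \<in> V"
  have "beta * real (CC E v) > 0" by (rule mult_pos_pos[OF beta_pos]) (use CC_pos[OF v] in simp)
  moreover have "(0::real) \<le> real (MM E N v)" by (rule of_nat_0_le_iff)
  ultimately have "Gamma (beta * real (CC E v)) > 0" "Gamma (beta * real (CC E v) + real (MM E N v)) > 0"
    using Gamma_real_pos add_pos_nonneg by blast+
  then show ?thesis by simp
qed

lemma TI_stage:
  assumes v: "v \<in> TI"
  shows "stagefac E r stg lab \<alpha> N (stg v) = inverse (GG v) * (\<Prod>w\<in>children E v. GG w)"
proof -
  have sitv: "v \<in> situations E" using v TI_sit by auto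
  have mem: "stage_members E stg (stg v) = {v}"
    unfolding stage_members_def using sat_uniq[OF v] sitv by auto
  have bij: "bij_betw (\<lambda>w. lab (v, w)) (children E v) {1..card (children E v)}"
  proof -
    have "\<forall>v\<in>situations E. bij_betw (\<lambda>w. lab (v, w)) (children E v) {1..card (children E v)}"
      using st unfolding staged_tree_def by blast
    then show ?thesis using sitv by blast
  qed
  have s1: "(\<Sum>w\<in>children E v. beta * real (CC E w)) = beta * real (CC E v)"
    using CC_split[OF sitv] by (simp add: sum_distrib_left)
  have s2: "(\<Sum>w\<in>children E v. real (MM E N w)) = real (MM E N v)"
    using MM_split[OF sitv, of N] by simp
  show ?thesis
    unfolding singleton_stage[OF pt mem bij] s1 s2 by simp
qed

lemma s_stage:
  "stagefac E' r stg lab' \<alpha> N' (stg s) = inverse (GG s) * (\<Prod>l\<in>LL. GG l)"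
proof -
  have sit: "s \<in> situations E'" using sit_E' by auto
  have mem: "stage_members E' stg (stg s) = {s}"
    unfolding stage_members_def sit_E' using sat_uniq[OF sTI] sTI by auto
  have chs: "children E' s = LL" using children_E' by simp
  have bij: "bij_betw (\<lambda>w. lab' (s, w)) (children E' s) {1..card (children E' s)}"
    unfolding chs by (rule lab'_bij)
  have LInn: "\<And>l. l \<in> LL \<Longrightarrow> {l} \<inter> Inn = {}" using Inn_eq by auto
  have c: "\<And>l. l \<in> LL \<Longrightarrow> card (PW E' r {l}) = CC E l" using CC_transfer LInn by blast
  have m: "\<And>l. l \<in> LL \<Longrightarrow> (\<Sum>xs\<in>PW E' r {l}. N' xs) = MM E N l" using MM_transfer LInn by blast
  have s1: "(\<Sum>l\<in>LL. beta * real (CC E l)) = beta * real (CC E s)"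
    using CC_tele by (simp add: sum_distrib_left)
  have s2: "(\<Sum>l\<in>LL. real (MM E N l)) = real (MM E N s)"
    using MM_tele[of N] by simp
  have "stagefac E' r stg lab' \<alpha> N' (stg s) =
    Gamma (\<Sum>l\<in>LL. beta * real (CC E l)) / Gamma ((\<Sum>l\<in>LL. beta * real (CC E l)) + (\<Sum>l\<in>LL. real (MM E N l)))
     * (\<Prod>l\<in>LL. GG l)"
    unfolding singleton_stage[OF pt' mem bij] chs card_RP
    by (simp add: c m cong: sum.cong prod.cong)
  also have "\<dots> = inverse (GG s) * (\<Prod>l\<in>LL. GG l)" unfolding s1 s2 by simp
  finally show ?thesis .
qed

lemma main: "BDepu E r stg lab \<alpha> N = BDepu E' r stg lab' \<alpha> N'"
proof -
  have st1: "stages E stg = stg ` (situations E - TI) \<union> stg ` TI"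
    unfolding stages_def using TI_sub_sit by auto
  have st2: "stages E' stg = insert (stg s) (stg ` (situations E - TI))"
    unfolding stages_def sit_E' by auto
  have finA: "finite (stg ` (situations E - TI))" using fin_sit by auto
  have "BDepu E r stg lab \<alpha> N =
      (\<Prod>j\<in>stg ` (situations E - TI). stagefac E r stg lab \<alpha> N j) *
      (\<Prod>j\<in>stg ` TI. stagefac E r stg lab \<alpha> N j)"
    unfolding BDepu_alt st1 by (rule prod.union_disjoint) (use finA finTI stg_disj in auto)
  also have "(\<Prod>j\<in>stg ` TI. stagefac E r stg lab \<alpha> N j) = (\<Prod>v\<in>TI. stagefac E r stg lab \<alpha> N (stg v))"
    using prod.reindex[OF inj_stg] by simp
  also have "\<dots> = (\<Prod>v\<in>TI. inverse (GG v) * (\<Prod>w\<in>children E v. GG w))"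
    using TI_stage by simp
  also have "\<dots> = inverse (GG s) * (\<Prod>l\<in>LL. GG l)"
    by (rule tele_prod) (use GG_nz TV in auto)
  also have "\<dots> = stagefac E' r stg lab' \<alpha> N' (stg s)" using s_stage by simp
  also have "(\<Prod>j\<in>stg ` (situations E - TI). stagefac E r stg lab \<alpha> N j)
      = (\<Prod>j\<in>stg ` (situations E - TI). stagefac E' r stg lab' \<alpha> N' j)"
    using other_stage by (intro prod.cong) auto
  also have "(\<Prod>j\<in>stg ` (situations E - TI). stagefac E' r stg lab' \<alpha> N' j) *
      stagefac E' r stg lab' \<alpha> N' (stg s) = BDepu E' r stg lab' \<alpha> N'"
    unfolding BDepu_alt st2 prod.insert[OF finA stg_s_notin] by (rule mult.commute)
  finally show ?thesis .
qed

end
end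

theorem lemma4:
  fixes V :: "'a set" and E :: "('a \<times> 'a) set" and r :: 'a
    and stg :: "'a \<Rightarrow> 'b" and lab lab' :: "'a \<times> 'a \<Rightarrow> nat"
    and s :: 'a and T :: "'a set" and \<alpha> :: real
    and N N' :: "'a list \<Rightarrow> nat"
  assumes "staged_tree V E r stg lab"
    and "square_free E r stg"
    and "subtree V E s T"
    and "saturated E stg T"
    and "\<forall>e\<in>resize_edges E s T. fst e \<noteq> s \<longrightarrow> lab' e = lab e"
    and "bij_betw (\<lambda>l. lab' (s, l)) (subleaves E T) {1..card (subleaves E T)}"
    and "\<alpha> > 0"
    and "\<forall>xs\<in>rl_paths E r. N' (contract_path E s T xs) = N xs"
  shows "BDepu E r stg lab \<alpha> N = BDepu (resize_edges E s T) r stg lab' \<alpha> N'"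
proof -
  interpret rsz V E r stg lab lab' s T
    using assms by unfold_locales auto
  show ?thesis using main assms(7,8) by blast
qed


end
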